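(* Let $R$ be a finite commutative local Frobenius ring with residue field $\mathbb{F}_q$. Let $\{C_1,C_2\}$ be a pair of linear codes over $R$ of length $n$ such that $C_1+C_2=R^n$. If $\{C_1,C_2\}$ is a $0$-DLIP, then $C_1$ and $C_2$ are free.
   Context: A linear code of length $n$ over $R$ is an $R$-submodule of $R^n$; it is free if it is a free $R$-module. $\dim(C):=\log_q|C|$, and a pair $\{C,D\}$ is a $0$-DLIP if $\dim(C\cap D)=0$, i.e. $C\cap D=\{\mathbf{0}\}$. *)

theory Defs
  imports "HOL-Analysis.Analysis"
begin

definition is_ideal :: "'a::comm_ring_1 set \<Rightarrow> bool" where
  "is_ideal I \<longleftrightarrow> 0 \<in> I \<and> (\<forall>x\<in>I. \<forall>y\<in>I. x + y \<in> I) \<and> (\<forall>r. \<forall>x\<in>I. r * x \<in> I)"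

definition maximal_ideal :: "'a::comm_ring_1 set \<Rightarrow> bool" where
  "maximal_ideal M \<longleftrightarrow> is_ideal M \<and> M \<noteq> UNIV \<and>
     (\<forall>J. is_ideal J \<and> M \<subseteq> J \<longrightarrow> J = M \<or> J = UNIV)"

definition local_ring :: "'a::comm_ring_1 itself \<Rightarrow> bool" where
  "local_ring _ \<longleftrightarrow> (\<exists>!M::'a set. maximal_ideal M)"

definition max_ideal :: "'a::comm_ring_1 itself \<Rightarrow> 'a set" where
  "max_ideal _ = (THE M::'a set. maximal_ideal M)"

definition minimal_ideal :: "'a::comm_ring_1 set \<Rightarrow> bool" where
  "minimal_ideal I \<longleftrightarrow> is_ideal I \<and> I \<noteq> {0} \<and>
     (\<forall>J. is_ideal J \<and> J \<subseteq> I \<longrightarrow> J = {0} \<or> J = I)"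

definition annihilator :: "'a::comm_ring_1 set \<Rightarrow> 'a set" where
  "annihilator S = {r. \<forall>s\<in>S. r * s = 0}"

text \<open>Frobenius for a finite commutative local ring R with maximal ideal m:
  soc(R) = ann(m) is isomorphic to R/m as an R-module, i.e. ann(m) is a simple
  R-module, i.e. a minimal ideal.\<close>
definition frobenius_local :: "'a::comm_ring_1 itself \<Rightarrow> bool" where
  "frobenius_local T \<longleftrightarrow> local_ring T \<and> minimal_ideal (annihilator (max_ideal T))"

text \<open>q = size of the residue field R/m (number of cosets of m).\<close>
definition residue_card :: "'a::comm_ring_1 itself \<Rightarrow> nat" where
  "residue_card T = card ((\<lambda>x. {y. x - y \<in> max_ideal T}) ` (UNIV::'a set))"

definition vscale :: "'a::comm_ring_1 \<Rightarrow> 'a ^ 'n \<Rightarrow> 'a ^ 'n" where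
  "vscale c v = (\<chi> i. c * v $ i)"

lemma module_vscale: "module (vscale :: 'a::comm_ring_1 \<Rightarrow> 'a ^ 'n \<Rightarrow> 'a ^ 'n)"
  by unfold_locales (simp_all add: vscale_def vec_eq_iff algebra_simps)

definition linear_code :: "('a::comm_ring_1 ^ 'n) set \<Rightarrow> bool" where
  "linear_code C \<longleftrightarrow> module.subspace vscale C"

definition free_code :: "('a::comm_ring_1 ^ 'n) set \<Rightarrow> bool" where
  "free_code C \<longleftrightarrow> (\<exists>B\<subseteq>C. module.independent vscale B \<and> module.span vscale B = C)"

definition code_dim :: "('a::comm_ring_1 ^ 'n) set \<Rightarrow> real" where
  "code_dim C = log (real (residue_card TYPE('a))) (real (card C))"

end

theory Submission
  imports Defs
begin

lemma sum_set_comm: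
  "{x + y |x y. x \<in> A \<and> y \<in> B} = {x + y |x y. x \<in> B \<and> y \<in> (A::'c::ab_semigroup_add set)}"
  using add.commute by blast

context module
begin

lemma indep_insert_coef:
  assumes ind: "independent (insert e B)" and eB: "e \<notin> B" and c: "scale c e \<in> span B"
  shows "c = 0"
proof -
  from c obtain t r where t: "finite t" "t \<subseteq> B" and ce: "scale c e = (\<Sum>a\<in>t. scale (r a) a)"
    by (auto simp: span_explicit)
  let ?u = "\<lambda>v. if v = e then - c else r v"
  have et: "e \<notin> t" using t eB by auto
  have "(\<Sum>v\<in>insert e t. scale (?u v) v) = scale (- c) e + (\<Sum>v\<in>t. scale (?u v) v)"
    using t et by (simp add: sum.insert)
  also have "(\<Sum>v\<in>t. scale (?u v) v) = (\<Sum>v\<in>t. scale (r v) v)"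
    using et by (intro sum.cong) auto
  finally have "(\<Sum>v\<in>insert e t. scale (?u v) v) = 0"
    using ce by (simp add: scale_left_distrib[symmetric])
  then have "?u e = 0"
    using independentD[OF ind, of "insert e t" ?u e] t by auto
  then show ?thesis by simp
qed

lemma indep_insertI:
  assumes ind: "independent B" and c: "\<And>c. scale c a \<in> span B \<Longrightarrow> c = 0"
  shows "independent (insert a B)"
proof (cases "a \<in> B")
  case True then show ?thesis using ind by (simp add: insert_absorb)
next
  case aB: False
  show ?thesis
    unfolding independent_explicit_module
  proof (intro allI impI)
    fix t u v
    assume t: "finite t" "t \<subseteq> insert a B" and s: "(\<Sum>v\<in>t. scale (u v) v) = 0" and v: "v \<in> t"
    have tB: "t - {a} \<subseteq> B" using t by auto
    have eq: "(\<Sum>w\<in>t. scale (u w) w) = (if a \<in> t then scale (u a) a else 0) + (\<Sum>w\<in>t-{a}. scale (u w) w)"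
      using t by (cases "a \<in> t") (auto simp: sum.remove)
    have ua: "u a = 0" if "a \<in> t"
    proof (rule c)
      have "scale (u a) a = - (\<Sum>w\<in>t-{a}. scale (u w) w)" using eq s that by (simp add: eq_neg_iff_add_eq_0)
      also have "\<dots> \<in> span B"
        using tB by (intro span_neg span_sum span_scale span_base) auto
      finally show "scale (u a) a \<in> span B" .
    qed
    have s2: "(\<Sum>w\<in>t-{a}. scale (u w) w) = 0"
      using eq s ua by (cases "a \<in> t") auto
    show "u v = 0"
    proof (cases "v = a")
      case True then show ?thesis using ua v by simp
    next
      case False
      then show ?thesis using independentD[OF ind, of "t - {a}" u v] t tB s2 v by auto
    qed
  qed
qed

lemma additive_zero:
  fixes f :: "'b \<Rightarrow> 'b"
  assumes "subspace S" "\<And>x y. x\<in>S \<Longrightarrow> y\<in>S \<Longrightarrow> f(x+y) = f x + f y"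
  shows "f 0 = 0"
proof -
  have "f (0 + 0) = f 0 + f 0" using assms subspace_0 by blast
  then have "f 0 + 0 = f 0 + f 0" by simp
  then have "0 = f 0" by (rule add_left_imp_eq)
  then show ?thesis by simp
qed

lemma additive_sum:
  fixes f :: "'b \<Rightarrow> 'b"
  assumes S: "subspace S" and add: "\<And>x y. x\<in>S \<Longrightarrow> y\<in>S \<Longrightarrow> f(x+y) = f x + f y"
    and hom: "\<And>c x. x\<in>S \<Longrightarrow> f(scale c x) = scale c (f x)"
    and fin: "finite t" and g: "\<And>v. v \<in> t \<Longrightarrow> g v \<in> S"
  shows "f (\<Sum>v\<in>t. scale (r v) (g v)) = (\<Sum>v\<in>t. scale (r v) (f (g v)))"
  using fin g
proof (induction t rule: finite_induct)
  case empty then show ?case using additive_zero[OF S add] by simp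
next
  case (insert x F)
  have "(\<Sum>v\<in>F. scale (r v) (g v)) \<in> S" using insert S by (intro subspace_sum subspace_scale) auto
  moreover have "scale (r x) (g x) \<in> S" using insert S by (intro subspace_scale) auto
  ultimately show ?case using insert add hom by simp
qed

lemma image_subspace:
  fixes f :: "'b \<Rightarrow> 'b"
  assumes S: "subspace S" and T: "subspace T" and ST: "S \<subseteq> T"
    and add: "\<And>x y. x\<in>T \<Longrightarrow> y\<in>T \<Longrightarrow> f(x+y) = f x + f y"
    and hom: "\<And>c x. x\<in>T \<Longrightarrow> f(scale c x) = scale c (f x)"
  shows "subspace (f ` S)"
proof (rule subspaceI)
  show "0 \<in> f ` S" using additive_zero[OF T add] S by (metis image_eqI subspace_0)
  show "x + y \<in> f ` S" if "x \<in> f ` S" "y \<in> f ` S" for x y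
    using that S ST add[symmetric] by (auto intro!: image_eqI subspace_add)
  show "scale c x \<in> f ` S" if xf: "x \<in> f ` S" for c x
  proof -
    obtain y where y: "y \<in> S" "x = f y" using xf by auto
    have "y \<in> T" using y ST by auto
    then have "scale c x = f (scale c y)" using y(2) hom by simp
    moreover have "scale c y \<in> S" using y S by (simp add: subspace_scale)
    ultimately show ?thesis by simp
  qed
qed

lemma iso_free:
  fixes f :: "'b \<Rightarrow> 'b"
  assumes S: "subspace S" and inj: "inj_on f S"
    and add: "\<And>x y. x\<in>S \<Longrightarrow> y\<in>S \<Longrightarrow> f(x+y) = f x + f y"
    and hom: "\<And>c x. x\<in>S \<Longrightarrow> f(scale c x) = scale c (f x)"
    and indB: "independent B'" and spB: "span B' = f ` S"
  shows "\<exists>B\<subseteq>S. independent B \<and> span B = S"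
proof -
  define g where "g = inv_into S f"
  have B'S: "B' \<subseteq> f ` S" using spB span_superset by blast
  have gS: "g y \<in> S" if "y \<in> B'" for y using that B'S by (auto simp: g_def inv_into_into)
  have fg: "f (g y) = y" if "y \<in> B'" for y using that B'S by (auto simp: g_def f_inv_into_f)
  have gf: "g (f x) = x" if "x \<in> S" for x using that inj by (simp add: g_def inv_into_f_f)
  let ?B = "g ` B'"
  have BS: "?B \<subseteq> S" using gS by auto
  have "span ?B \<subseteq> S" using BS S by (rule span_minimal)
  moreover have "S \<subseteq> span ?B"
  proof
    fix x assume x: "x \<in> S"
    then have "f x \<in> span B'" using spB by auto
    then obtain t r where t: "finite t" "t \<subseteq> B'" and fx: "f x = (\<Sum>a\<in>t. scale (r a) a)"
      by (auto simp: span_explicit)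
    let ?x = "\<Sum>a\<in>t. scale (r a) (g a)"
    have "f ?x = (\<Sum>a\<in>t. scale (r a) (f (g a)))"
      using t gS by (intro additive_sum[OF S add hom]) auto
    also have "\<dots> = f x" using fx fg t by (auto intro!: sum.cong)
    finally have "f ?x = f x" .
    moreover have "?x \<in> S" using t gS S by (intro subspace_sum subspace_scale) auto
    ultimately have "?x = x" using inj x by (auto dest: inj_onD)
    moreover have "?x \<in> span ?B" using t by (intro span_sum span_scale span_base) auto
    ultimately show "x \<in> span ?B" by simp
  qed
  moreover have "independent ?B"
    unfolding independent_explicit_module
  proof (intro allI impI)
    fix t u v
    assume t: "finite t" "t \<subseteq> ?B" and s: "(\<Sum>v\<in>t. scale (u v) v) = 0" and v: "v \<in> t"
    have tS: "t \<subseteq> S" using t BS by auto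
    have injt: "inj_on f t" using inj tS by (rule inj_on_subset)
    have "(\<Sum>y\<in>f ` t. scale (u (g y)) y) = (\<Sum>w\<in>t. scale (u (g (f w))) (f w))"
      using injt by (simp add: sum.reindex)
    also have "\<dots> = (\<Sum>w\<in>t. scale (u w) (f w))" using tS gf by (auto intro!: sum.cong)
    also have "\<dots> = f (\<Sum>w\<in>t. scale (u w) w)"
      using t tS by (intro additive_sum[OF S add hom, of t "\<lambda>w. w", symmetric]) auto
    also have "\<dots> = 0" using s additive_zero[OF S add] by simp
    finally have z: "(\<Sum>y\<in>f ` t. scale (u (g y)) y) = 0" .
    have ftB: "f ` t \<subseteq> B'" using t fg by auto
    have "u (g (f v)) = 0"
      using independentD[OF indB, of "f ` t" "\<lambda>y. u (g y)" "f v"] t ftB z v by auto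
    then show "u v = 0" using gf tS v by auto
  qed
  ultimately show ?thesis using BS by blast
qed

lemma proj_setup:
  assumes indE: "independent E" and eE: "e \<in> E"
    and M: "subspace M" and N: "subspace N"
    and sumMN: "{x + y |x y. x \<in> M \<and> y \<in> N} = span E" and capMN: "M \<inter> N = {0}"
    and aM: "a \<in> M" and unit: "\<alpha> dvd 1" and ae: "a - scale \<alpha> e \<in> span (E - {e})"
  obtains p where
    "subspace (p ` M)" "subspace (p ` N)"
    "{x + y |x y. x \<in> p ` M \<and> y \<in> p ` N} = span (E - {e})"
    "p ` M \<inter> p ` N = {0}"
    "\<And>x. \<exists>c. x = scale c a + p x"
    "\<And>c. scale c a \<in> span (E - {e}) \<Longrightarrow> c = 0"
    "\<And>x y. x \<in> span E \<Longrightarrow> y \<in> span E \<Longrightarrow> p (x + y) = p x + p y"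
    "\<And>c x. x \<in> span E \<Longrightarrow> p (scale c x) = scale c (p x)"
    "\<And>x. x \<in> span E \<Longrightarrow> p x \<in> span (E - {e})"
proof -
  let ?E' = "E - {e}"
  have insE: "insert e ?E' = E" using eE by auto
  have indE': "independent (insert e ?E')" using indE insE by simp
  obtain w where w: "1 = \<alpha> * w" using unit by (auto elim: dvdE)
  have P5: "c = 0" if c: "scale c a \<in> span ?E'" for c
  proof -
    have "scale (c * \<alpha>) e = scale c a - scale c (a - scale \<alpha> e)"
      by (simp add: scale_right_diff_distrib)
    also have "\<dots> \<in> span ?E'" by (rule span_diff[OF c span_scale[OF ae]])
    finally have "c * \<alpha> = 0" using indep_insert_coef[OF indE'] by auto
    then have "c * \<alpha> * w = 0" by simp
    then show "c = 0" using w by (simp add: mult.assoc)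
  qed
  have uniq: "c = d" if "x - scale c a \<in> span ?E'" "x - scale d a \<in> span ?E'" for x c d
  proof -
    have "scale (d - c) a = (x - scale c a) - (x - scale d a)"
      by (simp add: scale_left_diff_distrib)
    also have "\<dots> \<in> span ?E'" using that by (rule span_diff)
    finally have "d - c = 0" by (rule P5)
    then show ?thesis by simp
  qed
  have ex: "\<exists>c. x - scale c a \<in> span ?E'" if x: "x \<in> span E" for x
  proof -
    from x obtain k where k: "x - scale k e \<in> span ?E'"
      using span_breakdown_eq[of x e ?E'] insE by auto
    have "e - scale w a = - scale w (a - scale \<alpha> e)"
      using w by (simp add: scale_right_diff_distrib mult.commute)
    also have "\<dots> \<in> span ?E'" by (rule span_neg[OF span_scale[OF ae]])
    finally have ew: "e - scale w a \<in> span ?E'" .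
    have "x - scale (k * w) a = (x - scale k e) + scale k (e - scale w a)"
      by (simp add: scale_right_diff_distrib)
    also have "\<dots> \<in> span ?E'" by (rule span_add[OF k span_scale[OF ew]])
    finally show ?thesis by blast
  qed
  define g where "g x = (SOME c. x - scale c a \<in> span ?E')" for x
  define p where "p x = x - scale (g x) a" for x
  have gp: "p x \<in> span ?E'" if "x \<in> span E" for x
    using someI_ex[OF ex[OF that]] by (simp add: p_def g_def)
  have gI: "g x = c" if "x \<in> span E" "x - scale c a \<in> span ?E'" for x c
    using uniq[OF gp[OF that(1), unfolded p_def] that(2)] .
  have P4: "\<exists>c. x = scale c a + p x" for x by (auto simp: p_def)
  have E'E: "span ?E' \<subseteq> span E" by (rule span_mono) auto
  have pid: "p x = x" if "x \<in> span ?E'" for x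
  proof -
    have "g x = 0" using that E'E by (intro gI) auto
    then show ?thesis by (simp add: p_def)
  qed
  have p0: "p 0 = 0" using pid span_zero by blast
  have padd: "p (x + y) = p x + p y" if "x \<in> span E" "y \<in> span E" for x y
  proof -
    have "(x + y) - scale (g x + g y) a = p x + p y"
      by (simp add: p_def scale_left_distrib algebra_simps)
    also have "\<dots> \<in> span ?E'" by (rule span_add[OF gp[OF that(1)] gp[OF that(2)]])
    finally have "g (x + y) = g x + g y" using that by (intro gI span_add) auto
    then show ?thesis by (simp add: p_def scale_left_distrib algebra_simps)
  qed
  have pscale: "p (scale c x) = scale c (p x)" if "x \<in> span E" for c x
  proof -
    have "scale c x - scale (c * g x) a = scale c (p x)"
      by (simp add: p_def scale_right_diff_distrib)
    also have "\<dots> \<in> span ?E'" by (rule span_scale[OF gp[OF that]])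
    finally have "g (scale c x) = c * g x" using that by (intro gI span_scale) auto
    then show ?thesis by (simp add: p_def scale_right_diff_distrib)
  qed
  have MS: "M \<subseteq> span E" using sumMN subspace_0[OF N] by force
  have NS: "N \<subseteq> span E" using sumMN subspace_0[OF M] by force
  have P1: "subspace (p ` M)" by (rule image_subspace[OF M subspace_span MS padd pscale])
  have P1': "subspace (p ` N)" by (rule image_subspace[OF N subspace_span NS padd pscale])
  have P2: "{x + y |x y. x \<in> p ` M \<and> y \<in> p ` N} = span ?E'"
  proof (intro antisym subsetI)
    fix z assume "z \<in> {x + y |x y. x \<in> p ` M \<and> y \<in> p ` N}"
    then obtain x y where xy: "x \<in> M" "y \<in> N" "z = p x + p y" by auto
    have xyS: "x \<in> span E" "y \<in> span E" using xy MS NS by auto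
    have "z = p (x + y)" using xy(3) padd[OF xyS] by simp
    moreover have "x + y \<in> span E" using xy MS NS by (auto intro: span_add)
    ultimately show "z \<in> span ?E'" using gp by simp
  next
    fix z assume z: "z \<in> span ?E'"
    then have "z \<in> span E" using E'E by auto
    then obtain x y where xy: "x \<in> M" "y \<in> N" "z = x + y" using sumMN by blast
    have xyS: "x \<in> span E" "y \<in> span E" using xy MS NS by auto
    have "z = p x + p y" using pid[OF z] xy(3) padd[OF xyS] by simp
    then show "z \<in> {x + y |x y. x \<in> p ` M \<and> y \<in> p ` N}" using xy by blast
  qed
  have P3: "p ` M \<inter> p ` N = {0}"
  proof (intro antisym subsetI)
    fix z assume "z \<in> p ` M \<inter> p ` N"
    then obtain x y where xy: "x \<in> M" "y \<in> N" "z = p x" "z = p y" by auto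
    have "y = x - scale (g x - g y) a"
      using xy by (simp add: p_def scale_left_diff_distrib algebra_simps)
    also have "\<dots> \<in> M" using xy aM M by (intro subspace_diff subspace_scale)
    finally have "y = 0" using xy capMN by auto
    then show "z \<in> {0}" using xy p0 by simp
  next
    fix z :: 'b assume "z \<in> {0}"
    then show "z \<in> p ` M \<inter> p ` N" using p0 subspace_0[OF M] subspace_0[OF N] by force
  qed
  show ?thesis
    using that[OF P1 P1' P2 P3 P4 P5 padd pscale gp] .
qed

lemma core_free:
  assumes loc: "\<And>x y::'a. x + y = 1 \<Longrightarrow> x dvd 1 \<or> y dvd 1"
  shows "finite E \<Longrightarrow> independent E \<Longrightarrow> subspace M \<Longrightarrow> subspace N \<Longrightarrow>
    {x + y |x y. x \<in> M \<and> y \<in> N} = span E \<Longrightarrow> M \<inter> N = {0} \<Longrightarrow>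
    \<exists>B\<subseteq>M. independent B \<and> span B = M"
proof (induction "card E" arbitrary: E M N rule: less_induct)
  case (less E M N)
  note finE = less.prems(1) and indE = less.prems(2) and M = less.prems(3) and N = less.prems(4)
    and sumMN = less.prems(5) and capMN = less.prems(6)
  have sumNM: "{x + y |x y. x \<in> N \<and> y \<in> M} = span E"
    using sumMN sum_set_comm[of M N] by simp
  have capNM: "N \<inter> M = {0}" using capMN by auto
  show ?case
  proof (cases "E = {}")
    case True
    then have "M = {0}" using sumMN subspace_0[OF N] subspace_0[OF M] by force
    then show ?thesis using independent_empty by (intro exI[of _ "{}"]) auto
  next
    case False
    then obtain e where eE: "e \<in> E" by auto
    let ?E' = "E - {e}"
    have insE: "insert e ?E' = E" using eE by auto
    have indE': "independent (insert e ?E')" using indE insE by simp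
    have cardE': "card ?E' < card E" by (rule card_Diff1_less[OF finE eE])
    have finE': "finite ?E'" using finE by simp
    have indE'': "independent ?E'" using indE by (rule independent_mono) auto
    have MS: "M \<subseteq> span E" using sumMN subspace_0[OF N] by force
    have "e \<in> span E" using eE span_base by auto
    then obtain a b where ab: "a \<in> M" "b \<in> N" "e = a + b" using sumMN by blast
    obtain \<alpha> where \<alpha>: "a - scale \<alpha> e \<in> span ?E'"
      using span_breakdown_eq[of a e ?E'] insE MS ab by auto
    obtain \<beta> where \<beta>: "b - scale \<beta> e \<in> span ?E'"
      using span_breakdown_eq[of b e ?E'] insE sumMN ab subspace_0[OF M] by force
    have "scale (\<alpha> + \<beta> - 1) e = - ((a - scale \<alpha> e) + (b - scale \<beta> e))"
      using ab by (simp add: scale_left_diff_distrib scale_left_distrib algebra_simps)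
    also have "\<dots> \<in> span ?E'" by (rule span_neg[OF span_add[OF \<alpha> \<beta>]])
    finally have sp: "scale (\<alpha> + \<beta> - 1) e \<in> span ?E'" .
    have "e \<notin> ?E'" by simp
    from indep_insert_coef[OF indE' this sp] have "\<alpha> + \<beta> - 1 = 0" .
    then have "\<alpha> + \<beta> = 1" by simp
    then have "\<alpha> dvd 1 \<or> \<beta> dvd 1" by (rule loc)
    then show ?thesis
    proof
      assume u: "\<alpha> dvd 1"
      obtain p where P1: "subspace (p ` M)" "subspace (p ` N)"
        and P2: "{x + y |x y. x \<in> p ` M \<and> y \<in> p ` N} = span ?E'"
        and P3: "p ` M \<inter> p ` N = {0}"
        and P4: "\<And>x. \<exists>c. x = scale c a + p x"
        and P5: "\<And>c. scale c a \<in> span ?E' \<Longrightarrow> c = 0"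
        and P6: "\<And>x y. x \<in> span E \<Longrightarrow> y \<in> span E \<Longrightarrow> p (x + y) = p x + p y"
        and P7: "\<And>c x. x \<in> span E \<Longrightarrow> p (scale c x) = scale c (p x)"
        and P9: "\<And>x. x \<in> span E \<Longrightarrow> p x \<in> span ?E'"
        by (rule proj_setup[OF indE eE M N sumMN capMN ab(1) u \<alpha>]) (rule that)
      obtain B' where B': "B' \<subseteq> p ` M" "independent B'" "span B' = p ` M"
        using less.hyps[OF cardE' finE' indE'' P1 P2 P3] by auto
      have pM: "p ` M \<subseteq> M"
      proof
        fix z assume "z \<in> p ` M"
        then obtain x where x: "x \<in> M" "z = p x" by auto
        obtain c where c: "x = scale c a + p x" using P4 by blast
        have "p x = x - scale c a" using c by (metis add_diff_cancel_left')
        then have "z = x - scale c a" using x by simp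
        then show "z \<in> M" using x ab M by (simp add: subspace_diff subspace_scale)
      qed
      let ?B = "insert a B'"
      have BM: "?B \<subseteq> M" using B' pM ab by auto
      have "span ?B \<subseteq> M" using BM M by (rule span_minimal)
      moreover have "M \<subseteq> span ?B"
      proof
        fix x assume x: "x \<in> M"
        obtain c where c: "x = scale c a + p x" using P4 by blast
        have "p x \<in> span B'" using B' x by auto
        then have "p x \<in> span ?B" using span_mono[of B' ?B] by auto
        moreover have "a \<in> span ?B" by (rule span_base) simp
        ultimately have "scale c a + p x \<in> span ?B" by (intro span_add span_scale)
        then show "x \<in> span ?B" by (simp only: c[symmetric])
      qed
      moreover have "independent ?B"
      proof (rule indep_insertI[OF B'(2)])
        fix c assume "scale c a \<in> span B'"
        then have "scale c a \<in> p ` M" using B' by simp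
        then have "scale c a \<in> span ?E'" using P9 MS by auto
        then show "c = 0" by (rule P5)
      qed
      ultimately show ?thesis using BM by blast
    next
      assume u: "\<beta> dvd 1"
      obtain p where P1: "subspace (p ` N)" "subspace (p ` M)"
        and P2: "{x + y |x y. x \<in> p ` N \<and> y \<in> p ` M} = span ?E'"
        and P3: "p ` N \<inter> p ` M = {0}"
        and P4: "\<And>x. \<exists>c. x = scale c b + p x"
        and P5: "\<And>c. scale c b \<in> span ?E' \<Longrightarrow> c = 0"
        and P6: "\<And>x y. x \<in> span E \<Longrightarrow> y \<in> span E \<Longrightarrow> p (x + y) = p x + p y"
        and P7: "\<And>c x. x \<in> span E \<Longrightarrow> p (scale c x) = scale c (p x)"
        and P9: "\<And>x. x \<in> span E \<Longrightarrow> p x \<in> span ?E'"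
        by (rule proj_setup[OF indE eE N M sumNM capNM ab(2) u \<beta>]) (rule that)
      have P2': "{x + y |x y. x \<in> p ` M \<and> y \<in> p ` N} = span ?E'"
        using P2 sum_set_comm[of "p ` M" "p ` N"] by simp
      have P3': "p ` M \<inter> p ` N = {0}" using P3 by auto
      obtain B' where B': "independent B'" "span B' = p ` M"
        using less.hyps[OF cardE' finE' indE'' P1(2) P1(1) P2' P3'] by auto
      have inj: "inj_on p M"
      proof (rule inj_onI)
        fix x y assume x: "x \<in> M" and y: "y \<in> M" and pxy: "p x = p y"
        obtain c where c: "x = scale c b + p x" using P4 by blast
        obtain d where d: "y = scale d b + p y" using P4 by blast
        have e1: "p x = x - scale c b" using c by (metis add_diff_cancel_left')
        have e2: "p y = y - scale d b" using d by (metis add_diff_cancel_left')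
        have "x - y = scale c b - scale d b" using e1 e2 pxy by (simp add: algebra_simps)
        then have "x - y = scale (c - d) b" by (simp add: scale_left_diff_distrib)
        then have "x - y \<in> N" using ab N by (simp add: subspace_scale)
        moreover have "x - y \<in> M" using x y M by (simp add: subspace_diff)
        ultimately have "x - y \<in> M \<inter> N" by simp
        then have "x - y = 0" using capMN by simp
        then show "x = y" by simp
      qed
      show ?thesis
      proof (rule iso_free[OF M inj _ _ B'(1) B'(2)])
        fix x y assume "x \<in> M" "y \<in> M"
        then show "p (x + y) = p x + p y" using MS by (intro P6) auto
      next
        fix c x assume "x \<in> M"
        then show "p (scale c x) = scale c (p x)" using MS by (intro P7) auto
      qed
    qed
  qed
qed

end
interpretation vs: module "vscale :: 'a::comm_ring_1 \<Rightarrow> 'a ^ 'n \<Rightarrow> 'a ^ 'n"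
  by (rule module_vscale)

lemma ideal_one_univ: "is_ideal J \<Longrightarrow> (1::'a::comm_ring_1) \<in> J \<Longrightarrow> J = UNIV"
  unfolding is_ideal_def by (metis UNIV_eq_I mult.right_neutral)

lemma nonunit_in_maximal:
  fixes x :: "'a::{comm_ring_1,finite}"
  assumes nx: "\<not> x dvd 1"
  shows "\<exists>M. maximal_ideal M \<and> x \<in> M"
proof -
  define I where "I = {r * x | r. True}"
  define A where "A = {J. is_ideal J \<and> I \<subseteq> J \<and> J \<noteq> UNIV}"
  have idI: "is_ideal I" unfolding is_ideal_def I_def
  proof (intro conjI ballI allI)
    show "0 \<in> {r * x |r. True}" by (rule CollectI, rule exI[of _ 0]) simp
    fix u v assume "u \<in> {r * x |r. True}" "v \<in> {r * x |r. True}"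
    then obtain r s where "u = r * x" "v = s * x" by auto
    then show "u + v \<in> {r * x |r. True}" by (auto intro!: exI[of _ "r + s"] simp: algebra_simps)
  next
    fix t u assume "u \<in> {r * x |r. True}"
    then obtain r where "u = r * x" by auto
    then show "t * u \<in> {r * x |r. True}" by (auto intro!: exI[of _ "t * r"] simp: algebra_simps)
  qed
  have "1 \<notin> I" using nx unfolding I_def by (auto simp: dvd_def mult.commute)
  then have "I \<noteq> UNIV" by auto
  then have IA: "I \<in> A" using idI by (auto simp: A_def)
  have "finite A" by (rule finite_subset[of _ UNIV]) auto
  then obtain m where mA: "m \<in> A" and mmax: "\<forall>b\<in>A. m \<le> b \<longrightarrow> m = b"
    using finite_has_maximal[of A] IA by blast
  have "maximal_ideal m"
    unfolding maximal_ideal_def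
  proof (intro conjI allI impI)
    show "is_ideal m" "m \<noteq> UNIV" using mA by (auto simp: A_def)
    fix J assume J: "is_ideal J \<and> m \<subseteq> J"
    show "J = m \<or> J = UNIV"
    proof (cases "J = UNIV")
      case False
      then have "J \<in> A" using J mA by (auto simp: A_def)
      then have "m = J" using mmax J by blast
      then show ?thesis by simp
    qed simp
  qed
  moreover have "x \<in> m"
  proof -
    have "x \<in> I" unfolding I_def by (rule CollectI, rule exI[of _ 1]) simp
    then show ?thesis using mA unfolding A_def by blast
  qed
  ultimately show ?thesis by blast
qed

lemma local_units:
  assumes loc: "local_ring TYPE('a::{comm_ring_1,finite})"
  shows "\<And>x y::'a. x + y = 1 \<Longrightarrow> x dvd 1 \<or> y dvd 1"
proof (rule ccontr)
  fix x y :: 'a assume xy: "x + y = 1" and n: "\<not> (x dvd 1 \<or> y dvd 1)"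
  obtain Mx where Mx: "maximal_ideal Mx" "x \<in> Mx" using nonunit_in_maximal n by blast
  obtain My where My: "maximal_ideal My" "y \<in> My" using nonunit_in_maximal n by blast
  have ex1: "\<exists>!M::'a set. maximal_ideal M" using loc unfolding local_ring_def .
  have "Mx = My" using ex1 Mx(1) My(1) by (metis (no_types))
  then have yM: "y \<in> Mx" using My by simp
  have idM: "is_ideal Mx" and nU: "Mx \<noteq> UNIV" using Mx(1) unfolding maximal_ideal_def by auto
  have "x + y \<in> Mx" using idM Mx(2) yM unfolding is_ideal_def by blast
  then have "(1::'a) \<in> Mx" using xy by simp
  then have "Mx = UNIV" using idM ideal_one_univ by blast
  then show False using nU by simp
qed

lemma residue_card_ge2:
  assumes loc: "local_ring TYPE('a::{comm_ring_1,finite})"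
  shows "residue_card TYPE('a) \<ge> 2"
proof -
  define m where "m = max_ideal TYPE('a)"
  have mm: "maximal_ideal m"
    using loc unfolding m_def max_ideal_def local_ring_def by (rule theI')
  define f where "f x = {y. x - y \<in> m}" for x :: 'a
  have "f 0 \<noteq> f 1"
  proof
    assume eq: "f 0 = f 1"
    have "1 \<in> f 1" using mm by (simp add: f_def maximal_ideal_def is_ideal_def)
    then have "1 \<in> f 0" using eq by simp
    then have m1: "-1 \<in> m" by (simp add: f_def)
    have idm: "is_ideal m" using mm unfolding maximal_ideal_def by simp
    then have al: "\<forall>r. \<forall>x\<in>m. r * x \<in> m" unfolding is_ideal_def by simp
    have "(-1) * (-1::'a) \<in> m" using bspec[OF spec[OF al, of "-1"] m1] .
    then have "(1::'a) \<in> m" by simp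
    then have "m = UNIV" by (rule ideal_one_univ[OF idm])
    then show False using mm unfolding maximal_ideal_def by simp
  qed
  then have "card {f 0, f 1} = 2" by simp
  moreover have "card {f 0, f 1} \<le> card (f ` UNIV)" by (rule card_mono) (simp_all add: finite_imageI)
  ultimately show ?thesis unfolding residue_card_def f_def[abs_def] m_def by simp
qed

definition stdb :: "'n \<Rightarrow> 'a::comm_ring_1 ^ 'n" where
  "stdb i = (\<chi> j. if j = i then 1 else 0)"

lemma stdb_inj: "stdb i = stdb k \<longleftrightarrow> i = k"
  by (auto simp: stdb_def vec_eq_iff)

lemma stdb_span: "vs.span (range (stdb :: 'n::finite \<Rightarrow> 'a::comm_ring_1 ^ 'n)) = UNIV"
proof -
  have "v \<in> vs.span (range stdb)" for v :: "'a ^ 'n"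
  proof -
    have "v = (\<Sum>i\<in>UNIV. vscale (v $ i) (stdb i))"
      by (simp add: vec_eq_iff vscale_def stdb_def if_distrib cong: if_cong)
    also have "\<dots> \<in> vs.span (range stdb)"
      by (intro vs.span_sum vs.span_scale vs.span_base) auto
    finally show ?thesis .
  qed
  then show ?thesis by auto
qed

lemma stdb_indep: "vs.independent (range (stdb :: 'n::finite \<Rightarrow> 'a::comm_ring_1 ^ 'n))"
  unfolding vs.independent_explicit_module
proof (intro allI impI)
  fix t u v
  assume t: "finite t" "t \<subseteq> range (stdb :: 'n \<Rightarrow> 'a ^ 'n)" and s: "(\<Sum>v\<in>t. vscale (u v) v) = 0" and v: "v \<in> t"
  obtain k where k: "v = stdb k" using t v by auto
  have "0 = (\<Sum>w\<in>t. vscale (u w) w) $ k" using s by simp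
  also have "\<dots> = (\<Sum>w\<in>t. u w * w $ k)" by (simp add: vscale_def)
  also have "\<dots> = (\<Sum>w\<in>t. if w = v then u w else 0)"
  proof (rule sum.cong)
    fix w assume "w \<in> t"
    then obtain i where i: "w = stdb i" using t by auto
    show "u w * w $ k = (if w = v then u w else 0)"
      using i k stdb_inj[of i k] by (auto simp: stdb_def)
  qed simp
  also have "\<dots> = u v" using t v by simp
  finally show "u v = 0" by simp
qed


theorem corollary3p17:
  fixes C1 C2 :: "(('a::{comm_ring_1, finite}) ^ 'n) set"
  assumes "frobenius_local TYPE('a)"
    and "linear_code C1" and "linear_code C2"
    and "{x + y | x y. x \<in> C1 \<and> y \<in> C2} = UNIV"
    and "code_dim (C1 \<inter> C2) = 0"
  shows "free_code C1 \<and> free_code C2"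
proof -
  have loc: "local_ring TYPE('a)" using assms(1) unfolding frobenius_local_def by simp
  note units = local_units[OF loc]
  have q2: "residue_card TYPE('a) \<ge> 2" by (rule residue_card_ge2[OF loc])
  have S1: "vs.subspace C1" using assms(2) unfolding linear_code_def .
  have S2: "vs.subspace C2" using assms(3) unfolding linear_code_def .
  have cap: "C1 \<inter> C2 = {0}"
  proof -
    have z: "0 \<in> C1 \<inter> C2" using vs.subspace_0[OF S1] vs.subspace_0[OF S2] by simp
    have fin: "finite (C1 \<inter> C2)" by simp
    then have cpos: "card (C1 \<inter> C2) > 0" using z card_gt_0_iff by blast
    have lq: "ln (real (residue_card TYPE('a))) > 0" using q2 by simp
    have "ln (real (card (C1 \<inter> C2))) / ln (real (residue_card TYPE('a))) = 0"
      using assms(5) unfolding code_dim_def log_def .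
    then have "ln (real (card (C1 \<inter> C2))) = 0" using lq by simp
    then have "card (C1 \<inter> C2) = 1" using cpos by simp
    then show ?thesis using z by (metis card_1_singletonE singletonD)
  qed
  have fin: "finite (range (stdb :: 'n \<Rightarrow> 'a ^ 'n))" by simp
  have sum12: "{x + y |x y. x \<in> C1 \<and> y \<in> C2} = vs.span (range (stdb :: 'n \<Rightarrow> 'a ^ 'n))"
    unfolding assms(4) by (rule stdb_span[symmetric])
  have sum21: "{x + y |x y. x \<in> C2 \<and> y \<in> C1} = vs.span (range (stdb :: 'n \<Rightarrow> 'a ^ 'n))"
    using sum12 sum_set_comm[of C1 C2] by simp
  have cap21: "C2 \<inter> C1 = {0}" using cap by auto
  have "\<exists>B\<subseteq>C1. vs.independent B \<and> vs.span B = C1"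
    by (rule vs.core_free[OF units fin stdb_indep S1 S2 sum12 cap])
  moreover have "\<exists>B\<subseteq>C2. vs.independent B \<and> vs.span B = C2"
    by (rule vs.core_free[OF units fin stdb_indep S2 S1 sum21 cap21])
  ultimately show ?thesis unfolding free_code_def by simp
qed

end
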